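(* Let $\mathcal{A}$ be an association scheme with splitting field $L$ and let $E\subseteq\mathbb{C}$ be a field containing $L$ that is closed under complex conjugation. A non-zero $E$-linear map $\psi:E[\mathcal{A}]\to E[\mathcal{A}]$ is a Bose–Mesner algebra automorphism of $E[\mathcal{A}]$ if and only if $(MN)^\psi=M^\psi N^\psi$ and $(M\circ N)^\psi=M^\psi\circ N^\psi$ for all $M,N\in E[\mathcal{A}]$.
   Context: An association scheme on $v$ vertices is a set $\mathcal{A}=\{A_0,\ldots,A_d\}$ of $v\times v$ $(0,1)$-matrices with $A_0=I$, $\sum_iA_i=J$, closed under transpose, pairwise commuting, and with all products $A_iA_j$ in the span of $\mathcal{A}$. Its principal idempotents $E_0,\ldots,E_d$ are the pairwise orthogonal Hermitian idempotents summing to $I$ that form a basis of the span, with $A_iE_j=p_i(j)E_j$; the splitting field $L$ is $\mathbb{Q}(p_i(j): i,j)$. $E[\mathcal{A}]$ is the $E$-span of $\mathcal{A}$ and $\circ$ is the Schur (entrywise) product. An $E$-linear map $\psi$ on $E[\mathcal{A}]$ is a Bose–Mesner algebra automorphism if for all $M,N\in E[\mathcal{A}]$: $(MN)^\psi=M^\psi N^\psi$, $(M\circ N)^\psi=M^\psi\circ N^\psi$, $\psi$ is invertible, and $(M^* )^\psi=(M^\psi)^*$ ($M^*$ the conjugate transpose). *)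

theory Defs
  imports "HOL-Analysis.Analysis"
begin

text \<open>Complex v x v matrices are represented as complex^'n^'n, where the
finite type 'n is the vertex set (v = CARD('n)).  An association scheme
with d classes is an indexed family A 0, ..., A d.\<close>

type_synonym 'n cmat = "complex ^'n ^'n"

definition smult_mat :: "complex \<Rightarrow> 'n::finite cmat \<Rightarrow> 'n cmat" (infixr "*\<^sub>m" 75) where
  "c *\<^sub>m M = (\<chi> i j. c * M $ i $ j)"

definition schur :: "'n::finite cmat \<Rightarrow> 'n cmat \<Rightarrow> 'n cmat" (infixl "\<circ>\<^sub>S" 70) where
  "M \<circ>\<^sub>S N = (\<chi> i j. M $ i $ j * N $ i $ j)"

definition ctrans :: "'n::finite cmat \<Rightarrow> 'n cmat" where
  "ctrans M = (\<chi> i j. cnj (M $ j $ i))"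

definition all_ones :: "'n::finite cmat" where
  "all_ones = (\<chi> i j. 1)"

definition zero_one_mat :: "'n::finite cmat \<Rightarrow> bool" where
  "zero_one_mat M \<longleftrightarrow> (\<forall>i j. M $ i $ j = 0 \<or> M $ i $ j = 1)"

definition span_over :: "complex set \<Rightarrow> nat \<Rightarrow> (nat \<Rightarrow> 'n::finite cmat) \<Rightarrow> 'n cmat set" where
  "span_over K d B = {M. \<exists>c. (\<forall>k\<le>d. c k \<in> K) \<and> M = (\<Sum>k\<le>d. c k *\<^sub>m B k)}"

definition assoc_scheme :: "nat \<Rightarrow> (nat \<Rightarrow> 'n::finite cmat) \<Rightarrow> bool" where
  "assoc_scheme d A \<longleftrightarrow>
     A 0 = mat 1 \<and>
     (\<forall>i\<le>d. zero_one_mat (A i) \<and> A i \<noteq> 0) \<and>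
     (\<Sum>i\<le>d. A i) = all_ones \<and>
     (\<forall>i\<le>d. \<exists>j\<le>d. transpose (A i) = A j) \<and>
     (\<forall>i\<le>d. \<forall>j\<le>d. A i ** A j = A j ** A i) \<and>
     (\<forall>i\<le>d. \<forall>j\<le>d. A i ** A j \<in> span_over UNIV d A)"

definition principal_idempotents :: "nat \<Rightarrow> (nat \<Rightarrow> 'n::finite cmat) \<Rightarrow> (nat \<Rightarrow> 'n cmat) \<Rightarrow> bool" where
  "principal_idempotents d A Ep \<longleftrightarrow>
     (\<forall>j\<le>d. Ep j ** Ep j = Ep j \<and> ctrans (Ep j) = Ep j \<and> Ep j \<noteq> 0) \<and>
     (\<forall>j\<le>d. \<forall>k\<le>d. j \<noteq> k \<longrightarrow> Ep j ** Ep k = 0) \<and>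
     (\<Sum>j\<le>d. Ep j) = mat 1 \<and>
     span_over UNIV d Ep = span_over UNIV d A \<and>
     (\<forall>c. (\<Sum>j\<le>d. c j *\<^sub>m Ep j) = 0 \<longrightarrow> (\<forall>j\<le>d. c j = 0))"

definition scheme_eigenvalues :: "nat \<Rightarrow> (nat \<Rightarrow> 'n::finite cmat) \<Rightarrow> complex set" where
  "scheme_eigenvalues d A = {p. \<exists>Ep. principal_idempotents d A Ep \<and>
       (\<exists>i\<le>d. \<exists>j\<le>d. A i ** Ep j = p *\<^sub>m Ep j)}"

definition is_subfield :: "complex set \<Rightarrow> bool" where
  "is_subfield K \<longleftrightarrow> 0 \<in> K \<and> 1 \<in> K \<and>
     (\<forall>x\<in>K. \<forall>y\<in>K. x + y \<in> K \<and> x - y \<in> K \<and> x * y \<in> K) \<and>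
     (\<forall>x\<in>K. x \<noteq> 0 \<longrightarrow> inverse x \<in> K)"

definition splitting_field :: "nat \<Rightarrow> (nat \<Rightarrow> 'n::finite cmat) \<Rightarrow> complex set" where
  "splitting_field d A = \<Inter>{K. is_subfield K \<and> scheme_eigenvalues d A \<subseteq> K}"

definition E_linear_on :: "complex set \<Rightarrow> 'n::finite cmat set \<Rightarrow> ('n cmat \<Rightarrow> 'n cmat) \<Rightarrow> bool" where
  "E_linear_on K S \<psi> \<longleftrightarrow> (\<forall>M\<in>S. \<psi> M \<in> S) \<and>
     (\<forall>M\<in>S. \<forall>N\<in>S. \<psi> (M + N) = \<psi> M + \<psi> N) \<and>
     (\<forall>c\<in>K. \<forall>M\<in>S. \<psi> (c *\<^sub>m M) = c *\<^sub>m \<psi> M)"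

definition BM_automorphism :: "complex set \<Rightarrow> nat \<Rightarrow> (nat \<Rightarrow> 'n::finite cmat) \<Rightarrow> ('n cmat \<Rightarrow> 'n cmat) \<Rightarrow> bool" where
  "BM_automorphism K d A \<psi> \<longleftrightarrow>
     (let S = span_over K d A in
       E_linear_on K S \<psi> \<and>
       (\<forall>M\<in>S. \<forall>N\<in>S. \<psi> (M ** N) = \<psi> M ** \<psi> N) \<and>
       (\<forall>M\<in>S. \<forall>N\<in>S. \<psi> (M \<circ>\<^sub>S N) = \<psi> M \<circ>\<^sub>S \<psi> N) \<and>
       bij_betw \<psi> S S \<and>
       (\<forall>M\<in>S. \<psi> (ctrans M) = ctrans (\<psi> M)))"

end

theory Submission imports Defs begin


lemma sum_cmat_entry: "(sum f S :: 'n::finite cmat) $ x $ y = (\<Sum>k\<in>S. f k $ x $ y)"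
  by (simp add: sum_component)

lemma smult_entry[simp]: "(a *\<^sub>m M) $ x $ y = a * M $ x $ y"
  by (simp add: smult_mat_def)

lemma schur_entry[simp]: "(M \<circ>\<^sub>S N) $ x $ y = M $ x $ y * N $ x $ y"
  by (simp add: schur_def)

lemma ctrans_entry[simp]: "ctrans M $ x $ y = cnj (M $ y $ x)"
  by (simp add: ctrans_def)

lemma mul_entry: "(M ** N) $ x $ y = (\<Sum>z\<in>UNIV. M $ x $ z * N $ z $ y)"
  by (simp add: matrix_matrix_mult_def)

lemma sum_mul_left: "(\<Sum>k\<in>F. (B k :: 'n::finite cmat)) ** N = (\<Sum>k\<in>F. B k ** N)"
  by (simp add: vec_eq_iff sum_cmat_entry mul_entry sum_distrib_right sum.swap[of _ F])

lemma sum_mul_right: "N ** (\<Sum>k\<in>F. (B k :: 'n::finite cmat)) = (\<Sum>k\<in>F. N ** B k)"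
  by (simp add: vec_eq_iff sum_cmat_entry mul_entry sum_distrib_left sum.swap[of _ F])

lemma smult_mul_left: "(a *\<^sub>m (M::'n::finite cmat)) ** N = a *\<^sub>m (M ** N)"
  by (simp add: vec_eq_iff mul_entry sum_distrib_left mult.assoc)

lemma smult_mul_right: "(M::'n::finite cmat) ** (a *\<^sub>m N) = a *\<^sub>m (M ** N)"
  by (simp add: vec_eq_iff mul_entry sum_distrib_left mult_ac)

lemma exists_cls:
  assumes "assoc_scheme d (A :: nat \<Rightarrow> 'n::finite cmat)"
  shows "\<exists>c. (\<forall>x y. c x y \<le> d) \<and> (\<forall>k\<le>d. A k = (\<chi> x y. of_bool (c x y = k)))"
proof -
  have "\<forall>x y. \<exists>k. k \<le> d \<and> (\<forall>i\<le>d. A i $ x $ y = of_bool (i = k))"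
  proof (intro allI)
    fix x y
    let ?S = "{..d} \<inter> {i. A i $ x $ y = 1}"
    have zo: "\<forall>i\<le>d. A i $ x $ y = of_bool (A i $ x $ y = 1)"
      using assms unfolding assoc_scheme_def zero_one_mat_def by force
    have "1 = (\<Sum>i\<le>d. A i) $ x $ y"
      using assms unfolding assoc_scheme_def all_ones_def by simp
    also have "\<dots> = (\<Sum>i\<le>d. of_bool (A i $ x $ y = 1))"
      unfolding sum_cmat_entry using zo by (intro sum.cong) auto
    also have "\<dots> = of_nat (card ?S)" by simp
    finally have "card ?S = 1"
      by (metis of_nat_eq_1_iff)
    then obtain k where k: "?S = {k}" by (meson card_1_singletonE)
    have kS: "k \<in> ?S" using k by auto
    show "\<exists>k. k \<le> d \<and> (\<forall>i\<le>d. A i $ x $ y = of_bool (i = k))"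
    proof (intro exI conjI allI impI)
      show "k \<le> d" using kS by auto
      fix i assume i: "i \<le> d"
      show "A i $ x $ y = of_bool (i = k)"
      proof (cases "i = k")
        case True then show ?thesis using kS by auto
      next
        case False
        then have "i \<notin> ?S" using k by auto
        then have "A i $ x $ y \<noteq> 1" using i by auto
        moreover have "A i $ x $ y = of_bool (A i $ x $ y = 1)" using zo i by blast
        ultimately show ?thesis using False by simp
      qed
    qed
  qed
  then obtain c where c: "\<forall>x y. c x y \<le> d \<and> (\<forall>i\<le>d. A i $ x $ y = of_bool (i = c x y))"
    by metis
  show ?thesis
    by (rule exI[of _ c]) (use c in \<open>auto simp: vec_eq_iff\<close>)
qed



lemma smult_commute: "a *\<^sub>m (b *\<^sub>m (M::'n::finite cmat)) = b *\<^sub>m (a *\<^sub>m M)"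
  by (simp add: vec_eq_iff mult_ac)

lemma smult_sum: "a *\<^sub>m sum f F = (\<Sum>k\<in>F. a *\<^sub>m (f k :: 'n::finite cmat))"
  by (simp add: vec_eq_iff sum_cmat_entry sum_distrib_left)

lemma of_nat_in_subfield: "is_subfield K \<Longrightarrow> of_nat n \<in> K"
  by (induction n) (auto simp: is_subfield_def)

locale cls =
  fixes d :: nat and A :: "nat \<Rightarrow> 'n::finite cmat" and c :: "'n \<Rightarrow> 'n \<Rightarrow> nat"
  assumes c_le: "c x y \<le> d"
  and A_c: "k \<le> d \<Longrightarrow> A k = (\<chi> x y. of_bool (c x y = k))"
  and A_nz: "k \<le> d \<Longrightarrow> A k \<noteq> 0"
  and A0: "A 0 = mat 1"
  and comm: "i \<le> d \<Longrightarrow> j \<le> d \<Longrightarrow> A i ** A j = A j ** A i"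
  and trans_ex: "i \<le> d \<Longrightarrow> \<exists>j\<le>d. transpose (A i) = A j"
  and prod_span: "i \<le> d \<Longrightarrow> j \<le> d \<Longrightarrow> A i ** A j \<in> span_over UNIV d A"
begin

definition mk :: "(nat \<Rightarrow> complex) \<Rightarrow> 'n cmat" where "mk f = (\<chi> x y. f (c x y))"

lemma mk_entry[simp]: "mk f $ x $ y = f (c x y)"
  by (simp add: mk_def)

lemma A_entry: "k \<le> d \<Longrightarrow> A k $ x $ y = of_bool (c x y = k)"
  using A_c by simp

lemma c_surj: "k \<le> d \<Longrightarrow> \<exists>x y. c x y = k"
proof (rule ccontr)
  assume k: "k \<le> d" and "\<not> (\<exists>x y. c x y = k)"
  then have "A k = 0" using A_entry[OF k] by (auto simp: vec_eq_iff)
  then show False using A_nz k by blast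
qed

lemma c_diag: "c x x = 0"
  using A_entry[of 0 x x] A0 by (simp add: mat_def)

lemma A0_entry: "A 0 $ x $ y = of_bool (x = y)"
  using A0 by (simp add: mat_def)

lemma A_mk: "k \<le> d \<Longrightarrow> A k = mk (\<lambda>l. of_bool (l = k))"
  by (simp add: vec_eq_iff A_entry)

lemma sum_mk: "(\<Sum>k\<le>d. f k *\<^sub>m A k) = mk f"
proof -
  have "(\<Sum>k\<le>d. f k *\<^sub>m A k) $ x $ y = f (c x y)" for x y
  proof -
    have "(\<Sum>k\<le>d. f k *\<^sub>m A k) $ x $ y = (\<Sum>k\<le>d. f k * of_bool (c x y = k))"
      unfolding sum_cmat_entry by (intro sum.cong) (auto simp: A_entry)
    also have "\<dots> = (\<Sum>k\<in>{..d} \<inter> {k. c x y = k}. f k)" by simp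
    also have "{..d} \<inter> {k. c x y = k} = {c x y}" using c_le by auto
    finally show ?thesis by simp
  qed
  then show ?thesis by (simp add: vec_eq_iff)
qed

lemma mk_eq_iff: "mk f = mk g \<longleftrightarrow> (\<forall>k\<le>d. f k = g k)"
proof
  assume "mk f = mk g"
  then have "\<forall>x y. f (c x y) = g (c x y)" by (metis mk_entry)
  then show "\<forall>k\<le>d. f k = g k" using c_surj by metis
next
  assume "\<forall>k\<le>d. f k = g k"
  then show "mk f = mk g" using c_le by (simp add: vec_eq_iff)
qed

lemma mk_zero: "mk (\<lambda>_. 0) = 0"
  by (simp add: vec_eq_iff)

lemma mk_zero_iff: "mk f = 0 \<longleftrightarrow> (\<forall>k\<le>d. f k = 0)"
  using mk_eq_iff[of f "\<lambda>_. 0"] by (simp add: mk_zero)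

lemma span_char: "M \<in> span_over K d A \<longleftrightarrow> (\<exists>f. (\<forall>k\<le>d. f k \<in> K) \<and> M = mk f)"
  unfolding span_over_def sum_mk by auto

lemma mk_add: "mk f + mk g = mk (\<lambda>k. f k + g k)"
  by (simp add: vec_eq_iff)

lemma mk_smult: "a *\<^sub>m mk f = mk (\<lambda>k. a * f k)"
  by (simp add: vec_eq_iff)

lemma mk_schur: "mk f \<circ>\<^sub>S mk g = mk (\<lambda>k. f k * g k)"
  by (simp add: vec_eq_iff)

lemma mk_comm: "mk f ** mk g = mk g ** mk f"
proof -
  have e: "(\<Sum>k\<le>d. f k *\<^sub>m A k) ** (\<Sum>l\<le>d. g l *\<^sub>m A l)
      = (\<Sum>l\<le>d. \<Sum>k\<le>d. g l *\<^sub>m (f k *\<^sub>m (A k ** A l)))" for f g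
    by (simp add: sum_mul_left sum_mul_right smult_mul_left smult_mul_right smult_sum)
  have "mk f ** mk g = (\<Sum>l\<le>d. \<Sum>k\<le>d. g l *\<^sub>m (f k *\<^sub>m (A k ** A l)))"
    using e[of f g] by (simp add: sum_mk)
  also have "\<dots> = (\<Sum>k\<le>d. \<Sum>l\<le>d. g l *\<^sub>m (f k *\<^sub>m (A k ** A l)))"
    by (rule sum.swap)
  also have "\<dots> = (\<Sum>k\<le>d. \<Sum>l\<le>d. f k *\<^sub>m (g l *\<^sub>m (A l ** A k)))"
    by (intro sum.cong refl) (simp add: comm smult_commute)
  also have "\<dots> = mk g ** mk f"
    using e[of g f] by (simp add: sum_mk)
  finally show ?thesis .
qed

definition tau :: "nat \<Rightarrow> nat" where "tau k = (SOME j. j \<le> d \<and> transpose (A k) = A j)"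

lemma tau: "k \<le> d \<Longrightarrow> tau k \<le> d \<and> transpose (A k) = A (tau k)"
  unfolding tau_def using trans_ex[of k] by (rule someI_ex) auto

lemma c_swap: "c y x = tau (c x y)"
proof -
  let ?k = "c x y"
  have k: "?k \<le> d" by (rule c_le)
  have "A (tau ?k) $ y $ x = transpose (A ?k) $ y $ x" using tau[OF k] by simp
  also have "\<dots> = A ?k $ x $ y" by (simp add: transpose_def)
  also have "\<dots> = 1" using k by (simp add: A_entry)
  finally have "of_bool (c y x = tau ?k) = (1::complex)"
    using tau[OF k] A_entry by simp
  then show ?thesis by simp
qed

lemma ctrans_mk: "ctrans (mk f) = mk (\<lambda>l. cnj (f (tau l)))"
proof -
  have "ctrans (mk f) $ x $ y = mk (\<lambda>l. cnj (f (tau l))) $ x $ y" for x y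
    using c_swap[of y x] by simp
  then show ?thesis by (simp add: vec_eq_iff)
qed

lemma prod_entry:
  assumes i: "i \<le> d" and j: "j \<le> d"
  shows "(A i ** A j) $ x $ y = of_nat (card {z. c x z = i \<and> c z y = j})"
proof -
  have "(A i ** A j) $ x $ y = (\<Sum>z\<in>UNIV. of_bool (c x z = i) * of_bool (c z y = j))"
    using i j by (simp add: mul_entry A_entry)
  also have "\<dots> = (\<Sum>z\<in>UNIV. of_bool (c x z = i \<and> c z y = j))"
    by (simp only: of_bool_conj)
  also have "\<dots> = of_nat (card (UNIV \<inter> {z. c x z = i \<and> c z y = j}))"
    by simp
  finally show ?thesis by simp
qed

lemma prod_in_K:
  assumes K: "is_subfield K" and i: "i \<le> d" and j: "j \<le> d"
  shows "A i ** A j \<in> span_over K d A"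
proof -
  obtain f where f: "A i ** A j = mk f" using prod_span[OF i j] unfolding span_char by blast
  have "\<forall>l\<le>d. f l \<in> K"
  proof (intro allI impI)
    fix l assume "l \<le> d"
    then obtain x y where "c x y = l" using c_surj by blast
    then have "f l = (A i ** A j) $ x $ y" using f by simp
    then show "f l \<in> K" using prod_entry[OF i j] of_nat_in_subfield[OF K] by simp
  qed
  then show ?thesis using f unfolding span_char by blast
qed

lemma lemD:
  assumes i: "i \<le> d" and j: "j \<le> d"
  shows "(A i ** A j) \<circ>\<^sub>S A 0 \<noteq> 0 \<longleftrightarrow> j = tau i"
proof
  assume "(A i ** A j) \<circ>\<^sub>S A 0 \<noteq> 0"
  then obtain x y where "((A i ** A j) \<circ>\<^sub>S A 0) $ x $ y \<noteq> 0"
    by (metis vec_eq_iff zero_index)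
  then have "x = y" and "card {z. c x z = i \<and> c z x = j} \<noteq> 0"
    by (auto simp: prod_entry[OF i j] A0_entry)
  then obtain z where "c x z = i" "c z x = j"
    by (metis (mono_tags, lifting) card.empty empty_Collect_eq)
  then show "j = tau i" using c_swap by metis
next
  assume jt: "j = tau i"
  obtain x y where xy: "c x y = i" using c_surj i by blast
  then have "c y x = j" using jt c_swap by metis
  then have "y \<in> {z. c x z = i \<and> c z x = j}" using xy by simp
  then have "card {z. c x z = i \<and> c z x = j} \<noteq> 0"
    by (auto simp: card_eq_0_iff)
  then have "((A i ** A j) \<circ>\<^sub>S A 0) $ x $ x \<noteq> 0"
    by (simp add: prod_entry[OF i j] A0_entry)
  then show "(A i ** A j) \<circ>\<^sub>S A 0 \<noteq> 0" by (metis zero_index)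
qed

lemma diag_part: "mk f \<circ>\<^sub>S A 0 = f 0 *\<^sub>m A 0"
  by (simp add: A_mk mk_schur mk_smult mk_eq_iff) (metis gr0I)

end


lemma schur_lzero: "(0::'n::finite cmat) \<circ>\<^sub>S M = 0"
  by (simp add: vec_eq_iff)

lemma mul_lzero: "(0::'n::finite cmat) ** M = 0"
  by (simp add: vec_eq_iff mul_entry)

locale psi_ctx = cls d A c
  for d :: nat and A :: "nat \<Rightarrow> 'n::finite cmat" and c :: "'n \<Rightarrow> 'n \<Rightarrow> nat" +
  fixes K :: "complex set" and \<psi> :: "'n cmat \<Rightarrow> 'n cmat"
  assumes K: "is_subfield K"
  and Kcnj: "\<forall>x\<in>K. cnj x \<in> K"
  and lin: "E_linear_on K (span_over K d A) \<psi>"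
  and nz: "\<exists>M\<in>span_over K d A. \<psi> M \<noteq> 0"
  and hmul: "\<forall>M\<in>span_over K d A. \<forall>N\<in>span_over K d A. \<psi> (M ** N) = \<psi> M ** \<psi> N"
  and hschur: "\<forall>M\<in>span_over K d A. \<forall>N\<in>span_over K d A. \<psi> (M \<circ>\<^sub>S N) = \<psi> M \<circ>\<^sub>S \<psi> N"
begin

abbreviation "S \<equiv> span_over K d A"

lemma K0: "0 \<in> K" and K1: "1 \<in> K" and Kadd: "a \<in> K \<Longrightarrow> b \<in> K \<Longrightarrow> a + b \<in> K"
  and Kmul: "a \<in> K \<Longrightarrow> b \<in> K \<Longrightarrow> a * b \<in> K"
  using K by (auto simp: is_subfield_def)

lemma mk_in: "(\<And>k. k \<le> d \<Longrightarrow> f k \<in> K) \<Longrightarrow> mk f \<in> S"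
  using span_char by blast

lemma A_in: "k \<le> d \<Longrightarrow> A k \<in> S"
  by (simp add: A_mk K0 K1 mk_in)

lemma psi_in: "M \<in> S \<Longrightarrow> \<psi> M \<in> S"
  using lin by (simp add: E_linear_on_def)

lemma psi_add: "M \<in> S \<Longrightarrow> N \<in> S \<Longrightarrow> \<psi> (M + N) = \<psi> M + \<psi> N"
  using lin by (simp add: E_linear_on_def)

lemma psi_smult: "a \<in> K \<Longrightarrow> M \<in> S \<Longrightarrow> \<psi> (a *\<^sub>m M) = a *\<^sub>m \<psi> M"
  using lin by (simp add: E_linear_on_def)

lemma S_add: assumes "M \<in> S" "N \<in> S" shows "M + N \<in> S"
proof -
  obtain f where f: "\<forall>k\<le>d. f k \<in> K" "M = mk f" using assms(1) span_char by blast
  obtain g where g: "\<forall>k\<le>d. g k \<in> K" "N = mk g" using assms(2) span_char by blast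
  show ?thesis using f g Kadd by (auto simp: mk_add intro!: mk_in)
qed

lemma S_smult: assumes "a \<in> K" "M \<in> S" shows "a *\<^sub>m M \<in> S"
proof -
  obtain f where f: "\<forall>k\<le>d. f k \<in> K" "M = mk f" using assms(2) span_char by blast
  show ?thesis using f assms(1) Kmul by (auto simp: mk_smult intro!: mk_in)
qed

lemma S_schur: assumes "M \<in> S" "N \<in> S" shows "M \<circ>\<^sub>S N \<in> S"
proof -
  obtain f where f: "\<forall>k\<le>d. f k \<in> K" "M = mk f" using assms(1) span_char by blast
  obtain g where g: "\<forall>k\<le>d. g k \<in> K" "N = mk g" using assms(2) span_char by blast
  show ?thesis using f g Kmul by (auto simp: mk_schur intro!: mk_in)
qed

lemma zero_in: "(0::'n cmat) \<in> S"
  using mk_in[of "\<lambda>_. 0"] K0 mk_zero by simp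

lemma psi_zero: "\<psi> 0 = 0"
  using psi_add[OF zero_in zero_in] by simp

lemma psi_sum:
  assumes "finite F" "F \<subseteq> {..d}" "\<And>k. k \<le> d \<Longrightarrow> f k \<in> K"
  shows "(\<Sum>k\<in>F. f k *\<^sub>m A k) \<in> S \<and> \<psi> (\<Sum>k\<in>F. f k *\<^sub>m A k) = (\<Sum>k\<in>F. f k *\<^sub>m \<psi> (A k))"
  using assms
proof (induction F rule: finite_induct)
  case empty
  then show ?case using zero_in psi_zero by simp
next
  case (insert x F)
  have x: "x \<le> d" using insert by auto
  have xin: "f x *\<^sub>m A x \<in> S" using S_smult[OF insert(5)[OF x] A_in[OF x]] .
  have IH: "(\<Sum>k\<in>F. f k *\<^sub>m A k) \<in> S \<and> \<psi> (\<Sum>k\<in>F. f k *\<^sub>m A k) = (\<Sum>k\<in>F. f k *\<^sub>m \<psi> (A k))"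
    using insert by auto
  show ?case
    using insert(1,2) IH xin S_add psi_add psi_smult[OF insert(5)[OF x] A_in[OF x]] by simp
qed

lemma psi_mk_sum: "(\<And>k. k \<le> d \<Longrightarrow> f k \<in> K) \<Longrightarrow> \<psi> (mk f) = (\<Sum>k\<le>d. f k *\<^sub>m \<psi> (A k))"
  using psi_sum[of "{..d}" f] by (simp add: sum_mk)

definition pp :: "nat \<Rightarrow> nat \<Rightarrow> complex" where
  "pp k = (SOME g. (\<forall>l\<le>d. g l \<in> K) \<and> \<psi> (A k) = mk g)"

lemma pp: assumes k: "k \<le> d" shows "(\<forall>l\<le>d. pp k l \<in> K) \<and> \<psi> (A k) = mk (pp k)"
proof -
  have "\<exists>g. (\<forall>l\<le>d. g l \<in> K) \<and> \<psi> (A k) = mk g"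
    using psi_in[OF A_in[OF k]] unfolding span_char .
  then show ?thesis unfolding pp_def by (rule someI_ex)
qed

lemma psiA: "k \<le> d \<Longrightarrow> \<psi> (A k) = mk (pp k)" using pp by blast

lemma pp01: assumes k: "k \<le> d" and l: "l \<le> d" shows "pp k l = 0 \<or> pp k l = 1"
proof -
  have "A k \<circ>\<^sub>S A k = A k" using k by (simp add: vec_eq_iff A_entry)
  moreover have "\<psi> (A k \<circ>\<^sub>S A k) = \<psi> (A k) \<circ>\<^sub>S \<psi> (A k)" using hschur A_in[OF k] by blast
  ultimately have "mk (\<lambda>l. pp k l * pp k l) = mk (pp k)" by (simp add: psiA[OF k] mk_schur)
  then have "pp k l * pp k l = pp k l" using l by (simp add: mk_eq_iff)
  then have "pp k l * (pp k l - 1) = 0" by (simp add: algebra_simps)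
  then show ?thesis by simp
qed

lemma ppdisj: assumes i: "i \<le> d" and j: "j \<le> d" and ij: "i \<noteq> j" and l: "l \<le> d"
  shows "pp i l * pp j l = 0"
proof -
  have "A i \<circ>\<^sub>S A j = 0" using i j ij by (auto simp: vec_eq_iff A_entry)
  moreover have "\<psi> (A i \<circ>\<^sub>S A j) = \<psi> (A i) \<circ>\<^sub>S \<psi> (A j)" using hschur A_in[OF i] A_in[OF j] by blast
  ultimately have "mk (\<lambda>l. pp i l * pp j l) = 0" by (simp add: psiA i j mk_schur psi_zero)
  then show ?thesis using l by (simp add: mk_zero_iff)
qed


lemma psiI: "\<psi> (A 0) = A 0"
proof -
  define B where "B = \<psi> (A 0)"
  have d0: "(0::nat) \<le> d" by simp
  have Bmk: "B = mk (pp 0)" using psiA[OF d0] B_def by simp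
  have "\<psi> (A 0 ** A 0) = \<psi> (A 0) ** \<psi> (A 0)" using hmul A_in[OF d0] by blast
  then have BB: "B ** B = B" by (simp add: B_def A0)
  have Bnz: "B \<noteq> 0"
  proof
    assume B0: "B = 0"
    obtain M where M: "M \<in> S" "\<psi> M \<noteq> 0" using nz by blast
    have "\<psi> (A 0 ** M) = \<psi> (A 0) ** \<psi> M" using hmul A_in[OF d0] M(1) by blast
    then have "\<psi> M = 0" using B0 by (simp add: B_def A0 mul_lzero)
    then show False using M(2) by simp
  qed
  have b01: "B $ x $ y = 0 \<or> B $ x $ y = 1" for x y
    using pp01[OF d0 c_le[of x y]] by (auto simp: Bmk)
  define J :: "'n cmat" where "J = mk (\<lambda>_. 1)"
  have BJ: "B ** J = J ** B" using Bmk J_def mk_comm by simp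
  define r where "r x = (\<Sum>z\<in>UNIV. B $ x $ z)" for x
  have BJe: "(B ** J) $ x $ y = r x" for x y by (simp add: J_def r_def mul_entry)
  have JBe: "(J ** B) $ x $ y = (\<Sum>z\<in>UNIV. B $ z $ y)" for x y by (simp add: J_def mul_entry)
  have rcol: "r x = (\<Sum>z\<in>UNIV. B $ z $ y)" for x y
  proof -
    have "r x = (B ** J) $ x $ y" by (simp only: BJe)
    also have "\<dots> = (J ** B) $ x $ y" by (simp only: BJ)
    also have "\<dots> = (\<Sum>z\<in>UNIV. B $ z $ y)" by (rule JBe)
    finally show ?thesis .
  qed
  have rconst: "r x = r x'" for x x' using rcol[of x undefined] rcol[of x' undefined] by simp
  have rsq: "r x * r x = r x" for x
  proof -
    have "(B ** (B ** J)) $ x $ x = (\<Sum>z\<in>UNIV. B $ x $ z * r z)"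
      by (simp only: mul_entry[of B "B ** J"] BJe)
    also have "\<dots> = (\<Sum>z\<in>UNIV. B $ x $ z * r x)" by (intro sum.cong refl arg_cong2[where f="(*)"] rconst)
    also have "\<dots> = r x * r x" by (simp add: r_def sum_distrib_right)
    finally have e1: "(B ** (B ** J)) $ x $ x = r x * r x" .
    have "B ** (B ** J) = B ** J" by (simp add: matrix_mul_assoc BB)
    then show ?thesis using e1 BJe[of x x] by simp
  qed
  have rcard: "r x = of_nat (card {z. B $ x $ z = 1})" for x
  proof -
    have "r x = (\<Sum>z\<in>UNIV. of_bool (B $ x $ z = 1))" unfolding r_def
      by (rule sum.cong[OF refl]) (use b01 in \<open>metis of_bool_eq(1) of_bool_eq(2) zero_neq_one\<close>)
    also have "\<dots> = of_nat (card {z. B $ x $ z = 1})" by simp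
    finally show ?thesis .
  qed
  obtain x0 y0 where "B $ x0 $ y0 \<noteq> 0" using Bnz by (metis vec_eq_iff zero_index)
  then have "B $ x0 $ y0 = 1" using b01[of x0 y0] by auto
  then have "card {z. B $ x0 $ z = 1} \<noteq> 0" by (auto simp: card_eq_0_iff)
  then have "r x0 \<noteq> 0" using rcard by simp
  moreover have "r x0 * (r x0 - 1) = 0" using rsq[of x0] by (simp add: algebra_simps)
  ultimately have "r x0 = 1" by simp
  then have r1: "r x = 1" for x using rconst[of x x0] by simp
  have card1: "card {z. B $ x $ z = 1} = 1" for x using r1[of x] rcard[of x] by simp
  obtain y where y: "{z. B $ x0 $ z = 1} = {y}" using card1[of x0] by (meson card_1_singletonE)
  have Bx0: "B $ x0 $ z = of_bool (z = y)" for z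
  proof -
    have "B $ x0 $ z = 1 \<longleftrightarrow> z = y" using y by blast
    then show ?thesis using b01[of x0 z] by auto
  qed
  have "(B ** B) $ x0 $ y = B $ y $ y" by (simp add: mul_entry Bx0)
  moreover have "B $ x0 $ y = 1" using Bx0 by simp
  ultimately have "B $ y $ y = 1" using BB by simp
  then have p00: "pp 0 0 = 1" by (simp add: Bmk c_diag)
  have Bxx: "B $ x $ x = 1" for x by (simp add: Bmk c_diag p00)
  have "B $ x $ z = A 0 $ x $ z" for x z
  proof -
    obtain w where w: "{z. B $ x $ z = 1} = {w}" using card1[of x] by (meson card_1_singletonE)
    have "x \<in> {z. B $ x $ z = 1}" using Bxx by simp
    then have wx: "w = x" using w by simp
    have "B $ x $ z = 1 \<longleftrightarrow> z = x" using w wx by blast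
    then show ?thesis using b01[of x z] by (auto simp: A0_entry)
  qed
  then show ?thesis unfolding B_def by (simp add: vec_eq_iff)
qed

lemma psi_nz: assumes k: "k \<le> d" shows "\<psi> (A k) \<noteq> 0"
proof
  assume z: "\<psi> (A k) = 0"
  have d0: "(0::nat) \<le> d" by simp
  have tk: "tau k \<le> d" using tau[OF k] by blast
  have XS: "A k ** A (tau k) \<in> S" using prod_in_K[OF K k tk] .
  then obtain f where f: "\<forall>l\<le>d. f l \<in> K" "A k ** A (tau k) = mk f" unfolding span_char by blast
  have Ynz: "(A k ** A (tau k)) \<circ>\<^sub>S A 0 \<noteq> 0" using lemD[OF k tk] by simp
  have Yeq: "(A k ** A (tau k)) \<circ>\<^sub>S A 0 = f 0 *\<^sub>m A 0" using f(2) diag_part by simp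
  have f0: "f 0 \<in> K" using f(1) by simp
  have "\<psi> ((A k ** A (tau k)) \<circ>\<^sub>S A 0) = f 0 *\<^sub>m A 0"
    using Yeq psi_smult[OF f0 A_in[OF d0]] psiI by simp
  moreover have "\<psi> ((A k ** A (tau k)) \<circ>\<^sub>S A 0) = \<psi> (A k ** A (tau k)) \<circ>\<^sub>S \<psi> (A 0)"
    using hschur XS A_in[OF d0] by blast
  moreover have "\<psi> (A k ** A (tau k)) = \<psi> (A k) ** \<psi> (A (tau k))"
    using hmul A_in[OF k] A_in[OF tk] by blast
  moreover have "\<psi> (A k) ** \<psi> (A (tau k)) = 0" using z by (simp add: mul_lzero)
  ultimately have "f 0 *\<^sub>m A 0 = 0" by (simp add: schur_lzero)
  then show False using Ynz Yeq by simp
qed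

lemma ex_one: assumes k: "k \<le> d" shows "\<exists>l\<le>d. pp k l = 1"
proof -
  have "mk (pp k) \<noteq> 0" using psi_nz[OF k] psiA[OF k] by simp
  then obtain l where "l \<le> d" "pp k l \<noteq> 0" unfolding mk_zero_iff by blast
  then show ?thesis using pp01[OF k] by blast
qed

definition sg :: "nat \<Rightarrow> nat" where "sg k = (SOME l. l \<le> d \<and> pp k l = 1)"

lemma sg: assumes k: "k \<le> d" shows "sg k \<le> d \<and> pp k (sg k) = 1"
proof -
  have "\<exists>l. l \<le> d \<and> pp k l = 1" using ex_one[OF k] by blast
  then show ?thesis unfolding sg_def by (rule someI_ex)
qed

lemma sg_inj: "inj_on sg {..d}"
proof (rule inj_onI)
  fix i j assume i: "i \<in> {..d}" and j: "j \<in> {..d}" and e: "sg i = sg j"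
  show "i = j"
  proof (rule ccontr)
    assume "i \<noteq> j"
    moreover have "i \<le> d" "j \<le> d" "sg i \<le> d" using i j sg by auto
    ultimately have "pp i (sg i) * pp j (sg i) = 0" by (intro ppdisj)
    moreover have "pp i (sg i) = 1" using sg[of i] i by simp
    moreover have "pp j (sg i) = 1" using sg[of j] j e by simp
    ultimately show False by simp
  qed
qed

lemma sg_img: "sg ` {..d} = {..d}"
  using sg sg_inj by (intro endo_inj_surj) auto

lemma sg_bij: "bij_betw sg {..d} {..d}"
  using sg_inj sg_img by (simp add: bij_betw_def)

lemma pp_sg: assumes k: "k \<le> d" and l: "l \<le> d" shows "pp k l = of_bool (l = sg k)"
proof (cases "l = sg k")
  case True then show ?thesis using sg[OF k] by simp
next
  case False
  have "l \<in> sg ` {..d}" using l sg_img by simp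
  then obtain i where i: "i \<le> d" "l = sg i" by auto
  then have "i \<noteq> k" using False by auto
  then have "pp i l * pp k l = 0" using ppdisj i k l by auto
  then show ?thesis using sg[OF i(1)] i False by simp
qed

lemma psiA_sg: assumes k: "k \<le> d" shows "\<psi> (A k) = A (sg k)"
proof -
  have "\<psi> (A k) = mk (pp k)" using psiA[OF k] .
  also have "\<dots> = mk (\<lambda>l. of_bool (l = sg k))" using pp_sg[OF k] by (simp add: mk_eq_iff)
  also have "\<dots> = A (sg k)" using A_mk[of "sg k"] sg[OF k] by simp
  finally show ?thesis .
qed

definition rh :: "nat \<Rightarrow> nat" where "rh = the_inv_into {..d} sg"

lemma rh: "l \<le> d \<Longrightarrow> rh l \<le> d \<and> sg (rh l) = l"
proof -
  assume l: "l \<le> d"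
  have lI: "l \<in> sg ` {..d}" using l sg_img by simp
  show ?thesis unfolding rh_def
    using the_inv_into_into[OF sg_inj lI subset_refl] f_the_inv_into_f[OF sg_inj lI] by simp
qed

lemma rh_sg: "k \<le> d \<Longrightarrow> rh (sg k) = k"
  unfolding rh_def using sg_inj by (simp add: the_inv_into_f_f)

lemma psi_mk: assumes f: "\<And>k. k \<le> d \<Longrightarrow> f k \<in> K" shows "\<psi> (mk f) = mk (\<lambda>l. f (rh l))"
proof -
  have "\<psi> (mk f) = (\<Sum>k\<le>d. f k *\<^sub>m A (sg k))"
    using psi_mk_sum[OF f] psiA_sg by simp
  also have "\<dots> = (\<Sum>k\<in>{..d}. (\<lambda>l. f (rh l) *\<^sub>m A l) (sg k))"
    using rh_sg by simp
  also have "\<dots> = (\<Sum>l\<le>d. f (rh l) *\<^sub>m A l)"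
    by (rule sum.reindex_bij_betw[OF sg_bij])
  also have "\<dots> = mk (\<lambda>l. f (rh l))" by (rule sum_mk)
  finally show ?thesis .
qed

lemma psi_inj0: assumes M: "M \<in> S" and z: "\<psi> M = 0" shows "M = 0"
proof -
  obtain f where f: "\<forall>k\<le>d. f k \<in> K" "M = mk f" using M unfolding span_char by blast
  have "mk (\<lambda>l. f (rh l)) = 0" using psi_mk f z by simp
  then have "\<forall>l\<le>d. f (rh l) = 0" by (simp add: mk_zero_iff)
  then have "\<forall>k\<le>d. f k = 0" using sg rh_sg by (metis (no_types))
  then show ?thesis using f by (simp add: mk_zero_iff)
qed

lemma comm_st: assumes i: "i \<le> d" shows "sg (tau i) = tau (sg i)"
proof -
  have d0: "(0::nat) \<le> d" by simp
  have ti: "tau i \<le> d" using tau[OF i] by blast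
  have XS: "A i ** A (tau i) \<in> S" using prod_in_K[OF K i ti] .
  have YS: "(A i ** A (tau i)) \<circ>\<^sub>S A 0 \<in> S" using S_schur[OF XS A_in[OF d0]] .
  have "(A i ** A (tau i)) \<circ>\<^sub>S A 0 \<noteq> 0" using lemD[OF i ti] by simp
  then have nz': "\<psi> ((A i ** A (tau i)) \<circ>\<^sub>S A 0) \<noteq> 0" using psi_inj0 YS by blast
  have "\<psi> ((A i ** A (tau i)) \<circ>\<^sub>S A 0) = \<psi> (A i ** A (tau i)) \<circ>\<^sub>S \<psi> (A 0)"
    using hschur XS A_in[OF d0] by blast
  moreover have "\<psi> (A i ** A (tau i)) = \<psi> (A i) ** \<psi> (A (tau i))"
    using hmul A_in[OF i] A_in[OF ti] by blast
  ultimately have "(A (sg i) ** A (sg (tau i))) \<circ>\<^sub>S A 0 \<noteq> 0"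
    using nz' psiA_sg[OF i] psiA_sg[OF ti] psiI by simp
  moreover have "sg i \<le> d" "sg (tau i) \<le> d" using sg i ti by auto
  ultimately show ?thesis using lemD by simp
qed

lemma comm_rt: assumes l: "l \<le> d" shows "tau (rh l) = rh (tau l)"
proof -
  have r: "rh l \<le> d" "sg (rh l) = l" using rh[OF l] by auto
  have "sg (tau (rh l)) = tau l" using comm_st[OF r(1)] r(2) by simp
  then have "rh (sg (tau (rh l))) = rh (tau l)" by simp
  moreover have "rh (sg (tau (rh l))) = tau (rh l)" using rh_sg tau[OF r(1)] by simp
  ultimately show ?thesis by simp
qed

lemma psi_bij: "bij_betw \<psi> S S"
  unfolding bij_betw_def
proof
  show "inj_on \<psi> S"
  proof (rule inj_onI)
    fix M N assume M: "M \<in> S" and N: "N \<in> S" and e: "\<psi> M = \<psi> N"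
    obtain f where f: "\<forall>k\<le>d. f k \<in> K" "M = mk f" using M unfolding span_char by blast
    obtain g where g: "\<forall>k\<le>d. g k \<in> K" "N = mk g" using N unfolding span_char by blast
    have "mk (\<lambda>l. f (rh l)) = mk (\<lambda>l. g (rh l))" using e f g psi_mk by simp
    then have "\<forall>l\<le>d. f (rh l) = g (rh l)" by (simp add: mk_eq_iff)
    then have "\<forall>k\<le>d. f k = g k" using sg rh_sg by (metis (no_types))
    then show "M = N" using f g by (simp add: mk_eq_iff)
  qed
  show "\<psi> ` S = S"
  proof
    show "\<psi> ` S \<subseteq> S" using psi_in by blast
    show "S \<subseteq> \<psi> ` S"
    proof
      fix N assume N: "N \<in> S"
      obtain g where g: "\<forall>k\<le>d. g k \<in> K" "N = mk g" using N unfolding span_char by blast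
      have gs: "\<And>k. k \<le> d \<Longrightarrow> g (sg k) \<in> K" using g sg by blast
      have "\<psi> (mk (\<lambda>k. g (sg k))) = mk (\<lambda>l. g (sg (rh l)))" using psi_mk[OF gs] by simp
      also have "\<dots> = N" using g rh by (simp add: mk_eq_iff)
      finally have "N = \<psi> (mk (\<lambda>k. g (sg k)))" by simp
      then show "N \<in> \<psi> ` S" using mk_in[of "\<lambda>k. g (sg k)", OF gs] by blast
    qed
  qed
qed

lemma psi_ctrans: assumes M: "M \<in> S" shows "\<psi> (ctrans M) = ctrans (\<psi> M)"
proof -
  obtain f where f: "\<forall>k\<le>d. f k \<in> K" "M = mk f" using M unfolding span_char by blast
  have fc: "\<And>l. l \<le> d \<Longrightarrow> cnj (f (tau l)) \<in> K" using f tau Kcnj by blast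
  have "\<psi> (ctrans M) = mk (\<lambda>l. cnj (f (tau (rh l))))"
    using f(2) ctrans_mk psi_mk[OF fc] by simp
  also have "\<dots> = mk (\<lambda>l. cnj (f (rh (tau l))))"
    using comm_rt by (simp add: mk_eq_iff)
  also have "\<dots> = ctrans (\<psi> M)"
    using f psi_mk ctrans_mk by simp
  finally show ?thesis .
qed
end

theorem theorem3p3:
  fixes A :: "nat \<Rightarrow> 'n::finite cmat" and d :: nat
    and K :: "complex set" and \<psi> :: "'n cmat \<Rightarrow> 'n cmat"
  assumes "assoc_scheme d A"
    and "is_subfield K"
    and "splitting_field d A \<subseteq> K"
    and "\<forall>x\<in>K. cnj x \<in> K"
    and "E_linear_on K (span_over K d A) \<psi>"
    and "\<exists>M\<in>span_over K d A. \<psi> M \<noteq> 0"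
  shows "BM_automorphism K d A \<psi> \<longleftrightarrow>
          (\<forall>M\<in>span_over K d A. \<forall>N\<in>span_over K d A.
              \<psi> (M ** N) = \<psi> M ** \<psi> N \<and> \<psi> (M \<circ>\<^sub>S N) = \<psi> M \<circ>\<^sub>S \<psi> N)"
proof -
  obtain c where c: "\<forall>x y. c x y \<le> d" "\<forall>k\<le>d. A k = (\<chi> x y. of_bool (c x y = k))"
    using exists_cls[OF assms(1)] by blast
  have cl: "cls d A c"
    using c assms(1) unfolding cls_def assoc_scheme_def by auto
  show ?thesis
  proof
    assume "BM_automorphism K d A \<psi>"
    then show "\<forall>M\<in>span_over K d A. \<forall>N\<in>span_over K d A.
              \<psi> (M ** N) = \<psi> M ** \<psi> N \<and> \<psi> (M \<circ>\<^sub>S N) = \<psi> M \<circ>\<^sub>S \<psi> N"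
      unfolding BM_automorphism_def Let_def by blast
  next
    assume R: "\<forall>M\<in>span_over K d A. \<forall>N\<in>span_over K d A.
              \<psi> (M ** N) = \<psi> M ** \<psi> N \<and> \<psi> (M \<circ>\<^sub>S N) = \<psi> M \<circ>\<^sub>S \<psi> N"
    have "psi_ctx d A c K \<psi>"
      unfolding psi_ctx_def psi_ctx_axioms_def using cl assms(2,4,5,6) R by blast
    then interpret P: psi_ctx d A c K \<psi> .
    show "BM_automorphism K d A \<psi>"
      unfolding BM_automorphism_def Let_def
      using assms(5) P.hmul P.hschur P.psi_bij P.psi_ctrans by blast
  qed
qed

end
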